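(* Let $G=(V,E)$ be a connected graph with $n$ vertices, $\tau$ a set of types with $|\tau|=k>1$, $f:\tau\to\mathbb{Q}_{\ge1}$ a fitness function, $\alpha\in\tau^+(f)$, $f^*=\max\{f(j):j\in\tau\setminus\{\alpha\}\}$, and suppose $f^*<f(\alpha)=f^+$. Let $M_0\in\Omega_0(G,\tau)$. Then $\mathbb{E}(A_\alpha(G,\tau,f,M_0))\le \frac{f^+}{f^+-f^*}(n+1)n^3$.
   Context: $f^+=\max_{i\in\tau}f(i)$, $\tau^+(f)=\{i:f(i)=f^+\}$. For $G=(V,E)$, $N(v)$ is the neighbourhood of $v$. For a state $S:V\to\tau$, $S|_{v\to w}$ equals $S$ except $w$ gets type $S(v)$. The Moran process $M(G,\tau,f,M_0)$: Markov chain on states from $M_0$; given $M_t$, choose $v$ with probability $f(M_t(v))/\sum_uf(M_t(u))$, then $w\in N(v)$ uniformly, set $M_{t+1}=M_t|_{v\to w}$. $V_j(t)=\{v:M_t(v)=j\}$. $\Omega_0(G,\tau)$ is the set of states $V\to\tau$ whose range is all of $\tau$. The absorption time of type $j$ is $A_j(G,\tau,f,M_0)=\min\{t\in\mathbb{Z}_{\ge0}: V_j(t)=V\text{ or }V_j(t)=\emptyset\}$. *)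

theory Defs
  imports "HOL-Probability.Probability"
begin

definition simple_graph :: "'v set \<Rightarrow> ('v \<times> 'v) set \<Rightarrow> bool" where
  "simple_graph V E \<longleftrightarrow> finite V \<and> E \<subseteq> V \<times> V \<and> sym E \<and> (\<forall>v. (v, v) \<notin> E)"

definition connected_graph :: "'v set \<Rightarrow> ('v \<times> 'v) set \<Rightarrow> bool" where
  "connected_graph V E \<longleftrightarrow> simple_graph V E \<and> (\<forall>u\<in>V. \<forall>v\<in>V. (u, v) \<in> E\<^sup>*)"

definition nbhd :: "('v \<times> 'v) set \<Rightarrow> 'v \<Rightarrow> 'v set" where
  "nbhd E v = {w. (v, w) \<in> E}"

definition fplus :: "'t set \<Rightarrow> ('t \<Rightarrow> real) \<Rightarrow> real" where
  "fplus \<tau> f = Max (f ` \<tau>)"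

definition tau_plus :: "'t set \<Rightarrow> ('t \<Rightarrow> real) \<Rightarrow> 't set" where
  "tau_plus \<tau> f = {i \<in> \<tau>. f i = fplus \<tau> f}"

definition Omega0 :: "'v set \<Rightarrow> 't set \<Rightarrow> ('v \<Rightarrow> 't) set" where
  "Omega0 V \<tau> = {S. S ` V = \<tau>}"

definition repl :: "('v \<Rightarrow> 't) \<Rightarrow> 'v \<Rightarrow> 'v \<Rightarrow> ('v \<Rightarrow> 't)" where
  "repl S v w = S(w := S v)"

definition moran_step :: "'v set \<Rightarrow> ('v \<times> 'v) set \<Rightarrow> ('t \<Rightarrow> real) \<Rightarrow> ('v \<Rightarrow> 't) \<Rightarrow> ('v \<Rightarrow> 't) pmf" where
  "moran_step V E f S =
     bind_pmf (embed_pmf (\<lambda>v. if v \<in> V then f (S v) / (\<Sum>u\<in>V. f (S u)) else 0))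
       (\<lambda>v. map_pmf (\<lambda>w. repl S v w) (pmf_of_set (nbhd E v)))"

definition absorbed :: "'v set \<Rightarrow> 't \<Rightarrow> ('v \<Rightarrow> 't) \<Rightarrow> bool" where
  "absorbed V j S \<longleftrightarrow> {v \<in> V. S v = j} = V \<or> {v \<in> V. S v = j} = {}"

primrec stopped_dist :: "'v set \<Rightarrow> ('v \<times> 'v) set \<Rightarrow> ('t \<Rightarrow> real) \<Rightarrow> 't \<Rightarrow> ('v \<Rightarrow> 't) \<Rightarrow> nat \<Rightarrow> ('v \<Rightarrow> 't) pmf" where
  "stopped_dist V E f j M0 0 = return_pmf M0"
| "stopped_dist V E f j M0 (Suc t) =
     bind_pmf (stopped_dist V E f j M0 t)
       (\<lambda>S. if absorbed V j S then return_pmf S else moran_step V E f S)"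

text \<open>P(A_j > t): the stopped chain is not yet absorbed at time t.\<close>
definition not_absorbed_prob :: "'v set \<Rightarrow> ('v \<times> 'v) set \<Rightarrow> ('t \<Rightarrow> real) \<Rightarrow> 't \<Rightarrow> ('v \<Rightarrow> 't) \<Rightarrow> nat \<Rightarrow> ennreal" where
  "not_absorbed_prob V E f j M0 t =
     emeasure (measure_pmf (stopped_dist V E f j M0 t)) {S. \<not> absorbed V j S}"

text \<open>E(A_j(G,tau,f,M0)) = sum_{t>=0} P(A_j > t) (tail-sum formula; value in [0,infinity]).\<close>
definition expected_absorption :: "'v set \<Rightarrow> ('v \<times> 'v) set \<Rightarrow> ('t \<Rightarrow> real) \<Rightarrow> 't \<Rightarrow> ('v \<Rightarrow> 't) \<Rightarrow> ennreal" where
  "expected_absorption V E f j M0 = (\<Sum>t. not_absorbed_prob V E f j M0 t)"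

end

theory Submission
  imports Defs
begin

lemma nn_exp:
  fixes p :: "'a pmf" and h :: "'a \<Rightarrow> real"
  assumes "\<And>x. 0 \<le> h x" "\<And>x. h x \<le> B"
  shows "(\<integral>\<^sup>+x. ennreal (h x) \<partial>p) = ennreal (\<integral>x. h x \<partial>p)"
  using assms by (intro nn_integral_eq_integral measure_pmf.integrable_const_bound[where B=B]) auto

lemma exp_le_const:
  fixes p :: "'a pmf" and h :: "'a \<Rightarrow> real"
  assumes "\<And>x. 0 \<le> h x" "\<And>x. h x \<le> B"
  shows "(\<integral>x. h x \<partial>p) \<le> B"
proof -
  have "0 \<le> B" using assms(1)[of undefined] assms(2)[of undefined] by linarith
  have "(\<integral>x. h x \<partial>p) \<le> (\<integral>x. B \<partial>p)"
    using assms \<open>0 \<le> B\<close> by (intro integral_mono measure_pmf.integrable_const_bound[where B=B]) auto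
  then show ?thesis by simp
qed

lemma exp_bind:
  fixes p :: "'a pmf" and q :: "'a \<Rightarrow> 'b pmf" and h :: "'b \<Rightarrow> real"
  assumes h0: "\<And>x. 0 \<le> h x" and hB: "\<And>x. h x \<le> B"
  shows "(\<integral>x. h x \<partial>bind_pmf p q) = (\<integral>x. (\<integral>y. h y \<partial>q x) \<partial>p)"
proof -
  have i0: "\<And>x. 0 \<le> (\<integral>y. h y \<partial>q x)" using h0 by (intro integral_nonneg_AE) auto
  have iB: "\<And>x. (\<integral>y. h y \<partial>q x) \<le> B" using h0 hB by (rule exp_le_const)
  have "ennreal (\<integral>x. h x \<partial>bind_pmf p q) = (\<integral>\<^sup>+x. ennreal (h x) \<partial>bind_pmf p q)"
    by (rule nn_exp[OF h0 hB, symmetric])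
  also have "\<dots> = (\<integral>\<^sup>+x. \<integral>\<^sup>+y. ennreal (h y) \<partial>q x \<partial>p)" by simp
  also have "\<dots> = (\<integral>\<^sup>+x. ennreal (\<integral>y. h y \<partial>q x) \<partial>p)"
    by (simp only: nn_exp[OF h0 hB])
  also have "\<dots> = ennreal (\<integral>x. (\<integral>y. h y \<partial>q x) \<partial>p)"
    by (rule nn_exp[OF i0 iB])
  finally show ?thesis
    using i0 h0 by (simp add: integral_nonneg_AE)
qed

lemma sumtest: fixes g :: "nat \<Rightarrow> ennreal" assumes "\<And>n. (\<Sum>i<n. g i) \<le> C" shows "suminf g \<le> C"
  unfolding suminf_eq_SUP using assms by (simp add: SUP_least)

lemma embed_facts:
  fixes S :: "'v \<Rightarrow> 't" and f :: "'t \<Rightarrow> real"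
  assumes finV: "finite V" and fpos: "\<And>u. u \<in> V \<Longrightarrow> 0 < f (S u)" and ne: "V \<noteq> {}"
  defines "g \<equiv> (\<lambda>v. if v \<in> V then f (S v) / (\<Sum>u\<in>V. f (S u)) else 0)"
  shows "\<And>x. 0 \<le> g x" and "(\<integral>\<^sup>+x. g x \<partial>count_space UNIV) = 1"
proof -
  have W: "0 < (\<Sum>u\<in>V. f (S u))" using fpos finV ne by (intro sum_pos) auto
  show g0: "\<And>x. 0 \<le> g x" unfolding g_def using W fpos by (auto intro: less_imp_le)
  have "(\<integral>\<^sup>+x. g x \<partial>count_space UNIV) = (\<Sum>x\<in>V. ennreal (g x))"
    by (rule nn_integral_count_space') (auto simp: finV g_def)
  also have "\<dots> = ennreal (\<Sum>x\<in>V. g x)" using g0 by simp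
  also have "(\<Sum>x\<in>V. g x) = 1"
    unfolding g_def using W by (simp add: sum_divide_distrib[symmetric])
  finally show "(\<integral>\<^sup>+x. g x \<partial>count_space UNIV) = 1" by simp
qed

lemma moran_set:
  fixes S :: "'v \<Rightarrow> 't" and f :: "'t \<Rightarrow> real"
  assumes finV: "finite V" and fpos: "\<And>u. u \<in> V \<Longrightarrow> 0 < f (S u)" and ne: "V \<noteq> {}"
    and nb: "\<And>v. v \<in> V \<Longrightarrow> nbhd E v \<noteq> {} \<and> nbhd E v \<subseteq> V"
  shows "set_pmf (moran_step V E f S) \<subseteq> {repl S v w |v w. v \<in> V \<and> w \<in> nbhd E v}"
proof -
  note ef = embed_facts[where V=V and S=S and f=f, OF finV fpos ne]
  have fin: "\<And>v. v \<in> V \<Longrightarrow> finite (nbhd E v)" using nb finV finite_subset by blast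
  show ?thesis
    unfolding moran_step_def using nb fin
    by (auto simp: set_embed_pmf[OF ef] split: if_splits)
qed

lemma moran_exp:
  fixes S :: "'v \<Rightarrow> 't" and f :: "'t \<Rightarrow> real" and h :: "('v \<Rightarrow> 't) \<Rightarrow> real"
  assumes finV: "finite V" and fpos: "\<And>u. u \<in> V \<Longrightarrow> 0 < f (S u)" and ne: "V \<noteq> {}"
    and nb: "\<And>v. v \<in> V \<Longrightarrow> nbhd E v \<noteq> {} \<and> nbhd E v \<subseteq> V"
    and h0: "\<And>x. 0 \<le> h x" and hB: "\<And>x. h x \<le> B"
  shows "(\<integral>x. h x \<partial>moran_step V E f S) =
    (\<Sum>v\<in>V. f (S v) / (\<Sum>u\<in>V. f (S u)) * ((\<Sum>w\<in>nbhd E v. h (repl S v w)) / real (card (nbhd E v))))"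
proof -
  note ef = embed_facts[where V=V and S=S and f=f, OF finV fpos ne]
  have fin: "\<And>v. v \<in> V \<Longrightarrow> finite (nbhd E v)" using nb finV finite_subset by blast
  let ?g = "(\<lambda>v. if v \<in> V then f (S v) / (\<Sum>u\<in>V. f (S u)) else 0)"
  have "(\<integral>x. h x \<partial>moran_step V E f S) =
     (\<integral>v. (\<integral>y. h y \<partial>map_pmf (\<lambda>w. repl S v w) (pmf_of_set (nbhd E v))) \<partial>embed_pmf ?g)"
    unfolding moran_step_def by (rule exp_bind[OF h0 hB])
  also have "\<dots> = (\<Sum>v\<in>V. (\<integral>y. h y \<partial>map_pmf (\<lambda>w. repl S v w) (pmf_of_set (nbhd E v))) * pmf (embed_pmf ?g) v)"
    by (rule integral_measure_pmf_real) (auto simp: finV set_embed_pmf[OF ef] split: if_splits)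
  also have "\<dots> = (\<Sum>v\<in>V. f (S v) / (\<Sum>u\<in>V. f (S u)) * ((\<Sum>w\<in>nbhd E v. h (repl S v w)) / real (card (nbhd E v))))"
    by (intro sum.cong refl) (simp add: pmf_embed_pmf[OF ef] integral_pmf_of_set fin nb mult.commute)
  finally show ?thesis .
qed

definition ind :: "'t \<Rightarrow> 't \<Rightarrow> real" where "ind a y = (if y = a then 1 else 0)"
definition deg :: "('v \<times> 'v) set \<Rightarrow> 'v \<Rightarrow> real" where "deg E v = real (card (nbhd E v))"
definition phi :: "'v set \<Rightarrow> ('v \<times> 'v) set \<Rightarrow> 't \<Rightarrow> ('v \<Rightarrow> 't) \<Rightarrow> real" where
  "phi V E a S = (\<Sum>u\<in>V. ind a (S u) / deg E u)"

lemma ind_simps: "0 \<le> ind a y" "ind a y \<le> 1" by (auto simp: ind_def)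

lemma phi_nonneg: "0 \<le> phi V E a S"
  unfolding phi_def deg_def by (intro sum_nonneg divide_nonneg_nonneg ind_simps) auto

lemma phi_le: "phi V E a S \<le> real (card V)"
proof -
  have "phi V E a S \<le> (\<Sum>u\<in>V. 1)"
    unfolding phi_def
  proof (intro sum_mono)
    fix u
    show "ind a (S u) / deg E u \<le> 1"
      unfolding deg_def using ind_simps[of a "S u"]
      by (cases "card (nbhd E u)") (auto simp: divide_le_eq)
  qed
  then show ?thesis by simp
qed

lemma phi_upd:
  assumes "finite V" "w \<in> V"
  shows "phi V E a (S(w := x)) = phi V E a S - ind a (S w) / deg E w + ind a x / deg E w"
proof -
  have "phi V E a (S(w := x)) = ind a x / deg E w + (\<Sum>u\<in>V - {w}. ind a (S u) / deg E u)"
    unfolding phi_def using assms by (simp add: sum.remove)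
  moreover have "phi V E a S = ind a (S w) / deg E w + (\<Sum>u\<in>V - {w}. ind a (S u) / deg E u)"
    unfolding phi_def using assms by (simp add: sum.remove)
  ultimately show ?thesis by simp
qed

lemma drift:
  fixes S :: "'v \<Rightarrow> 't" and f :: "'t \<Rightarrow> real"
  assumes finV: "finite V" and ne: "V \<noteq> {}"
    and nb: "\<And>v. v \<in> V \<Longrightarrow> nbhd E v \<noteq> {} \<and> nbhd E v \<subseteq> V"
    and EV: "E \<subseteq> V \<times> V" and symE: "sym E"
    and Stau: "\<And>u. u \<in> V \<Longrightarrow> S u \<in> \<tau>"
    and fpos: "\<And>j. j \<in> \<tau> \<Longrightarrow> 0 < f j"
    and fa: "f a = fp" and fmax: "\<And>j. j \<in> \<tau> \<Longrightarrow> f j \<le> fp"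
    and fsb: "\<And>j. j \<in> \<tau> \<Longrightarrow> j \<noteq> a \<Longrightarrow> f j \<le> fs" and fsp: "fs < fp"
    and bd: "(v0, w0) \<in> E" "S v0 = a" "S w0 \<noteq> a"
  shows "phi V E a S + (fp - fs) / (fp * real (card V) ^ 3) \<le> (\<integral>x. phi V E a x \<partial>moran_step V E f S)"
proof -
  define n where "n = real (card V)"
  define W where "W = (\<Sum>u\<in>V. f (S u))"
  define X where "X = (\<lambda>(v, w). f (S v) * (ind a (S v) - ind a (S w)) / (deg E v * deg E w))"
  have fSpos: "\<And>u. u \<in> V \<Longrightarrow> 0 < f (S u)" using fpos Stau by blast
  have Wpos: "0 < W" unfolding W_def using fSpos finV ne by (intro sum_pos) auto
  have npos: "0 < n" unfolding n_def using finV ne by (simp add: card_gt_0_iff)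
  have fin: "\<And>v. v \<in> V \<Longrightarrow> finite (nbhd E v)" using nb finV finite_subset by blast
  have dpos: "\<And>v. v \<in> V \<Longrightarrow> 0 < deg E v" unfolding deg_def using nb fin
    by (simp add: card_gt_0_iff)
  have dle: "\<And>v. v \<in> V \<Longrightarrow> deg E v \<le> n" unfolding deg_def n_def using nb finV
    by (simp add: card_mono)
  have Esig: "E = Sigma V (nbhd E)" using EV by (auto simp: nbhd_def)
  have eq1: "(\<integral>x. phi V E a x \<partial>moran_step V E f S) =
    (\<Sum>v\<in>V. f (S v) / W * ((\<Sum>w\<in>nbhd E v. phi V E a (repl S v w)) / deg E v))"
    unfolding W_def deg_def
    by (rule moran_exp[where V=V and S=S and f=f and E=E, OF finV fSpos ne nb phi_nonneg phi_le])
  have eq2: "f (S v) / W * ((\<Sum>w\<in>nbhd E v. phi V E a (repl S v w)) / deg E v)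
     = f (S v) / W * phi V E a S + (\<Sum>w\<in>nbhd E v. X (v, w)) / W" if v: "v \<in> V" for v
  proof -
    have "(\<Sum>w\<in>nbhd E v. phi V E a (repl S v w)) =
        (\<Sum>w\<in>nbhd E v. phi V E a S + (ind a (S v) - ind a (S w)) / deg E w)"
      using nb[OF v] finV
      by (intro sum.cong refl) (auto simp: repl_def phi_upd diff_divide_distrib)
    also have "\<dots> = deg E v * phi V E a S + (\<Sum>w\<in>nbhd E v. (ind a (S v) - ind a (S w)) / deg E w)"
      by (simp add: sum.distrib deg_def)
    finally have A: "(\<Sum>w\<in>nbhd E v. phi V E a (repl S v w)) = 
       deg E v * phi V E a S + (\<Sum>w\<in>nbhd E v. (ind a (S v) - ind a (S w)) / deg E w)" .
    have B: "(\<Sum>w\<in>nbhd E v. X (v, w)) = f (S v) / deg E v * (\<Sum>w\<in>nbhd E v. (ind a (S v) - ind a (S w)) / deg E w)"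
      unfolding X_def by (simp add: sum_distrib_left)
    show ?thesis unfolding A B using dpos[OF v] Wpos by (simp add: field_simps)
  qed
  have "(\<integral>x. phi V E a x \<partial>moran_step V E f S) =
     (\<Sum>v\<in>V. f (S v) / W * phi V E a S) + (\<Sum>v\<in>V. \<Sum>w\<in>nbhd E v. X (v, w)) / W"
  proof -
    have "(\<Sum>v\<in>V. f (S v) / W * ((\<Sum>w\<in>nbhd E v. phi V E a (repl S v w)) / deg E v)) =
      (\<Sum>v\<in>V. f (S v) / W * phi V E a S + (\<Sum>w\<in>nbhd E v. X (v, w)) / W)"
      by (rule sum.cong[OF refl eq2])
    then show ?thesis unfolding eq1 by (simp only: sum.distrib sum_divide_distrib)
  qed
  also have "(\<Sum>v\<in>V. f (S v) / W * phi V E a S) = phi V E a S"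
    using Wpos by (simp add: sum_distrib_right[symmetric] sum_divide_distrib[symmetric] W_def)
  also have "(\<Sum>v\<in>V. \<Sum>w\<in>nbhd E v. X (v, w)) = (\<Sum>p\<in>Sigma V (nbhd E). X p)"
    using finV fin by (simp add: sum.Sigma)
  also have "Sigma V (nbhd E) = E" by (rule Esig[symmetric])
  finally have eq3: "(\<integral>x. phi V E a x \<partial>moran_step V E f S) = phi V E a S + (\<Sum>p\<in>E. X p) / W" .
  have swapE: "(\<Sum>p\<in>E. X p) = (\<Sum>p\<in>E. X (prod.swap p))"
  proof -
    have "prod.swap ` E = E" using symE unfolding sym_def by (auto simp: image_iff) (metis swap_simp)
    then have "(\<Sum>p\<in>E. X p) = (\<Sum>p\<in>prod.swap ` E. X p)" by simp
    also have "\<dots> = (\<Sum>p\<in>E. X (prod.swap p))" by (subst sum.reindex) auto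
    finally show ?thesis .
  qed
  define Y where "Y = (\<lambda>p. X p + X (prod.swap p))"
  have sumY: "(\<Sum>p\<in>E. Y p) = 2 * (\<Sum>p\<in>E. X p)"
    unfolding Y_def sum.distrib swapE[symmetric] by simp
  have Yform: "Y (v, w) = (f (S v) - f (S w)) * (ind a (S v) - ind a (S w)) / (deg E v * deg E w)" for v w
    unfolding Y_def X_def by (simp add: field_simps diff_divide_distrib add_divide_distrib)
  have Y0: "0 \<le> Y p" if "p \<in> E" for p
  proof -
    obtain v w where p: "p = (v, w)" by (cases p)
    have vw: "v \<in> V" "w \<in> V" using that EV p by auto
    have "0 \<le> (f (S v) - f (S w)) * (ind a (S v) - ind a (S w))"
      using fmax[OF Stau[OF vw(1)]] fmax[OF Stau[OF vw(2)]] fa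
      by (auto simp: ind_def)
    then show ?thesis unfolding p Yform using dpos[OF vw(1)] dpos[OF vw(2)] by simp
  qed
  have v0w0: "v0 \<in> V" "w0 \<in> V" "v0 \<noteq> w0" using bd EV by auto
  have Ybd: "(fp - fs) / (n * n) \<le> Y (v0, w0)"
  proof -
    have "Y (v0, w0) = (fp - f (S w0)) / (deg E v0 * deg E w0)"
      unfolding Yform using bd fa by (simp add: ind_def)
    moreover have "fp - fs \<le> fp - f (S w0)" using fsb[OF Stau[OF v0w0(2)] bd(3)] by simp
    moreover have "deg E v0 * deg E w0 \<le> n * n"
      using dle[OF v0w0(1)] dle[OF v0w0(2)] dpos[OF v0w0(1)] dpos[OF v0w0(2)]
      by (intro mult_mono) auto
    moreover have "0 < deg E v0 * deg E w0" using dpos[OF v0w0(1)] dpos[OF v0w0(2)] by simp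
    ultimately show ?thesis using fsp by (simp add: frac_le)
  qed
  have Ysym: "Y (w0, v0) = Y (v0, w0)" unfolding Y_def by (simp add: add.commute)
  have "Y (v0, w0) + Y (w0, v0) = (\<Sum>p\<in>{(v0, w0), (w0, v0)}. Y p)" using v0w0 by simp
  also have "\<dots> \<le> (\<Sum>p\<in>E. Y p)"
    using bd symE Y0 finV EV
    by (intro sum_mono2) (auto simp: sym_def intro: finite_subset[OF EV])
  finally have "Y (v0, w0) + Y (w0, v0) \<le> 2 * (\<Sum>p\<in>E. X p)" using sumY by simp
  then have Xbd: "(fp - fs) / (n * n) \<le> (\<Sum>p\<in>E. X p)" using Ybd Ysym by linarith
  have Wle: "W \<le> n * fp" unfolding W_def n_def
    using sum_mono[of V "\<lambda>u. f (S u)" "\<lambda>u. fp"] fmax Stau by auto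
  have "(fp - fs) / (fp * n ^ 3) = ((fp - fs) / (n * n)) / (n * fp)"
    by (simp add: power3_eq_cube field_simps)
  also have "\<dots> \<le> (\<Sum>p\<in>E. X p) / W"
  proof (rule frac_le)
    have "0 \<le> (fp - fs) / (n * n)" using fsp npos by simp
    then show "0 \<le> (\<Sum>p\<in>E. X p)" using Xbd by linarith
  qed (use Xbd Wle Wpos in auto)
  finally show ?thesis unfolding eq3 n_def by simp
qed

lemma rtrancl_boundary:
  assumes "(x, y) \<in> R\<^sup>*" "P x" "\<not> P y"
  shows "\<exists>v w. (v, w) \<in> R \<and> P v \<and> \<not> P w"
  using assms by (induction rule: rtrancl_induct) auto

theorem corollary14:
  fixes V :: "'v set" and E :: "('v \<times> 'v) set" and \<tau> :: "'t set"
    and f :: "'t \<Rightarrow> real" and \<alpha> :: 't and M0 :: "'v \<Rightarrow> 't"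
  assumes G: "connected_graph V E"
    and tau_fin: "finite \<tau>" and k_gt1: "card \<tau> > 1"
    and f_rat: "\<forall>j\<in>\<tau>. f j \<in> \<rat> \<and> f j \<ge> 1"
    and alpha: "\<alpha> \<in> tau_plus \<tau> f"
    and fstar: "Max (f ` (\<tau> - {\<alpha>})) < f \<alpha>"
    and M0: "M0 \<in> Omega0 V \<tau>"
  shows "expected_absorption V E f \<alpha> M0
         \<le> ennreal (fplus \<tau> f / (fplus \<tau> f - Max (f ` (\<tau> - {\<alpha>})))
                    * (real (card V) + 1) * real (card V) ^ 3)"
proof -
  have sg: "finite V" "E \<subseteq> V \<times> V" "sym E" "\<And>v. (v, v) \<notin> E"
    using G unfolding connected_graph_def simple_graph_def by auto
  have conn: "\<And>u v. u \<in> V \<Longrightarrow> v \<in> V \<Longrightarrow> (u, v) \<in> E\<^sup>*"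
    using G unfolding connected_graph_def by auto
  have M0V: "M0 ` V = \<tau>" using M0 by (simp add: Omega0_def)
  have ane: "\<alpha> \<in> \<tau>" and fa: "f \<alpha> = fplus \<tau> f" using alpha by (auto simp: tau_plus_def)
  have tne: "\<tau> - {\<alpha>} \<noteq> {}"
  proof
    assume "\<tau> - {\<alpha>} = {}"
    then have "\<tau> = {\<alpha>}" using ane by auto
    then show False using k_gt1 by simp
  qed
  then obtain b where b: "b \<in> \<tau>" "b \<noteq> \<alpha>" by auto
  obtain va where va: "va \<in> V" "M0 va = \<alpha>" using ane M0V by (metis imageE)
  obtain vb where vb: "vb \<in> V" "M0 vb = b" using b M0V by (metis imageE)
  have Vne: "V \<noteq> {}" using va by auto
  have nb: "nbhd E v \<noteq> {} \<and> nbhd E v \<subseteq> V" if v: "v \<in> V" for v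
  proof
    obtain u where u: "u \<in> V" "u \<noteq> v" using va vb b by (cases "va = v") auto
    have "(v, u) \<in> E\<^sup>*" using conn v u by auto
    then obtain y where "(v, y) \<in> E" using u(2) by (cases rule: converse_rtranclE) auto
    then show "nbhd E v \<noteq> {}" by (auto simp: nbhd_def)
    show "nbhd E v \<subseteq> V" using sg(2) by (auto simp: nbhd_def)
  qed
  define fp where "fp = fplus \<tau> f"
  define fs where "fs = Max (f ` (\<tau> - {\<alpha>}))"
  define n where "n = real (card V)"
  have fmax: "\<And>j. j \<in> \<tau> \<Longrightarrow> f j \<le> fp" unfolding fp_def fplus_def using tau_fin by simp
  have fsb: "\<And>j. j \<in> \<tau> \<Longrightarrow> j \<noteq> \<alpha> \<Longrightarrow> f j \<le> fs" unfolding fs_def using tau_fin by simp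
  have fsp: "fs < fp" using fstar fa unfolding fs_def fp_def by simp
  have fpos: "\<And>j. j \<in> \<tau> \<Longrightarrow> 0 < f j" using f_rat by force
  have fp1: "0 < fp" using fpos[OF ane] fa fp_def by simp
  have npos: "0 < n" unfolding n_def using sg(1) Vne by (simp add: card_gt_0_iff)
  define \<delta> where "\<delta> = (fp - fs) / (fp * n ^ 3)"
  have dpos: "0 < \<delta>" unfolding \<delta>_def using fsp fp1 npos by simp
  define p where "p = stopped_dist V E f \<alpha> M0"
  define P where "P = (\<lambda>S. \<forall>u\<in>V. S u \<in> \<tau>)"
  define F where "F = (\<lambda>t. (\<integral>S. phi V E \<alpha> S \<partial>p t))"
  define A where "A = {S. \<not> absorbed V \<alpha> S}"
  define a where "a = (\<lambda>t. measure (p t) A)"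
  have fSpos: "\<And>S u. P S \<Longrightarrow> u \<in> V \<Longrightarrow> 0 < f (S u)" using fpos unfolding P_def by blast
  have inv: "\<forall>S\<in>set_pmf (p t). P S" for t
  proof (induction t)
    case 0
    then show ?case using M0V by (auto simp: p_def P_def)
  next
    case (Suc t)
    show ?case
    proof
      fix S' assume "S' \<in> set_pmf (p (Suc t))"
      then obtain S where S: "S \<in> set_pmf (p t)"
        and S': "S' \<in> set_pmf (if absorbed V \<alpha> S then return_pmf S else moran_step V E f S)"
        by (auto simp: p_def)
      have PS: "P S" using Suc S by blast
      show "P S'"
      proof (cases "absorbed V \<alpha> S")
        case True then show ?thesis using S' PS by simp
      next
        case False
        then have "S' \<in> set_pmf (moran_step V E f S)" using S' by simp
        then obtain v w where "S' = repl S v w" "v \<in> V" "w \<in> nbhd E v"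
          using moran_set[where V=V and S=S and f=f and E=E, OF sg(1) fSpos[OF PS] Vne nb] by blast
        then show ?thesis using PS by (auto simp: P_def repl_def)
      qed
    qed
  qed
  have Fle: "F t \<le> n" for t
    unfolding F_def n_def by (rule exp_le_const[OF phi_nonneg phi_le])
  have main: "\<delta> * (\<Sum>s<t. a s) \<le> F t" for t
  proof (induction t)
    case 0
    then show ?case by (simp add: F_def integral_nonneg_AE phi_nonneg)
  next
    case (Suc t)
    define G where "G = (\<lambda>S. (\<integral>x. phi V E \<alpha> x \<partial>(if absorbed V \<alpha> S then return_pmf S else moran_step V E f S)))"
    have FS: "F (Suc t) = (\<integral>S. G S \<partial>p t)"
      unfolding F_def G_def p_def stopped_dist.simps by (rule exp_bind[OF phi_nonneg phi_le])
    have pw: "phi V E \<alpha> S + \<delta> * indicator A S \<le> G S" if S: "S \<in> set_pmf (p t)" for S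
    proof (cases "absorbed V \<alpha> S")
      case True then show ?thesis by (simp add: G_def A_def)
    next
      case False
      have PS: "P S" using inv S by blast
      from False obtain x y where xy: "x \<in> V" "S x = \<alpha>" "y \<in> V" "S y \<noteq> \<alpha>"
        unfolding absorbed_def by blast
      obtain v0 w0 where bd: "(v0, w0) \<in> E" "S v0 = \<alpha>" "S w0 \<noteq> \<alpha>"
        using rtrancl_boundary[of x y E "\<lambda>z. S z = \<alpha>"] conn xy by blast
      have "phi V E \<alpha> S + \<delta> \<le> G S"
        unfolding G_def \<delta>_def n_def using False
        by (simp add: drift[where V=V and S=S and f=f and E=E and \<tau>=\<tau>, OF sg(1) Vne nb sg(2) sg(3) _ fpos fa[folded fp_def] fmax fsb fsp bd] PS[unfolded P_def])
      then show ?thesis using False by (simp add: A_def)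
    qed
    have "(\<integral>S. phi V E \<alpha> S + \<delta> * indicator A S \<partial>p t) \<le> (\<integral>S. G S \<partial>p t)"
    proof (rule integral_mono_AE)
      show "integrable (measure_pmf (p t)) (\<lambda>S. phi V E \<alpha> S + \<delta> * indicator A S)"
      proof (rule measure_pmf.integrable_const_bound[where B="n + \<delta>"])
        have b: "norm (phi V E \<alpha> S + \<delta> * indicator A S) \<le> n + \<delta>" for S
          using phi_nonneg[of V E \<alpha> S] phi_le[of V E \<alpha> S] dpos by (auto simp: n_def indicator_def)
        show "AE x in measure_pmf (p t). norm (phi V E \<alpha> x + \<delta> * indicator A x) \<le> n + \<delta>"
          by (rule AE_I2, rule b)
      qed simp
      have G0: "0 \<le> G S" for S unfolding G_def by (intro integral_nonneg_AE) (auto simp: phi_nonneg)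
      have GB: "G S \<le> n" for S unfolding G_def n_def by (rule exp_le_const[OF phi_nonneg phi_le])
      show "integrable (measure_pmf (p t)) G"
        by (rule measure_pmf.integrable_const_bound[where B="n"]) (use G0 GB in auto)
      show "AE S in measure_pmf (p t). phi V E \<alpha> S + \<delta> * indicator A S \<le> G S"
        using pw by (simp add: AE_measure_pmf_iff)
    qed
    also have "(\<integral>S. phi V E \<alpha> S + \<delta> * indicator A S \<partial>p t) = F t + \<delta> * a t"
    proof -
      have i1: "integrable (measure_pmf (p t)) (\<lambda>S. phi V E \<alpha> S)"
      proof (rule measure_pmf.integrable_const_bound[where B="n"])
        have b: "norm (phi V E \<alpha> S) \<le> n" for S
          using phi_nonneg[of V E \<alpha> S] phi_le[of V E \<alpha> S] by (auto simp: n_def)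
        show "AE x in measure_pmf (p t). norm (phi V E \<alpha> x) \<le> n"
          by (rule AE_I2, rule b)
      qed simp
      have i2: "integrable (measure_pmf (p t)) (\<lambda>S. \<delta> * indicator A S)"
        by (rule measure_pmf.integrable_const_bound[where B="\<delta>"])
           (use dpos in \<open>auto simp: indicator_def\<close>)
      show ?thesis using i1 i2 by (simp add: F_def a_def)
    qed
    finally show ?case using Suc FS by (simp add: algebra_simps)
  qed
  define C where "C = fp / (fp - fs) * (n + 1) * n ^ 3"
  have sumle: "(\<Sum>s<t. a s) \<le> C" for t
  proof -
    have "\<delta> * (\<Sum>s<t. a s) \<le> n" using main[of t] Fle[of t] by linarith
    then have "(\<Sum>s<t. a s) \<le> n / \<delta>" using dpos by (simp add: field_simps)
    also have "n / \<delta> = fp / (fp - fs) * n * n ^ 3"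
      unfolding \<delta>_def using fsp fp1 npos by (simp add: field_simps)
    also have "\<dots> \<le> C" unfolding C_def using fsp fp1 npos
      by (intro mult_right_mono mult_left_mono) auto
    finally show ?thesis .
  qed
  have na: "not_absorbed_prob V E f \<alpha> M0 t = ennreal (a t)" for t
    unfolding not_absorbed_prob_def a_def p_def A_def by (simp add: measure_pmf.emeasure_eq_measure)
  have "expected_absorption V E f \<alpha> M0 \<le> ennreal C"
    unfolding expected_absorption_def na
  proof (rule sumtest)
    fix t
    have "(\<Sum>i<t. ennreal (a i)) = ennreal (\<Sum>i<t. a i)" by (simp add: a_def)
    then show "(\<Sum>i<t. ennreal (a i)) \<le> ennreal C" using sumle[of t] by (simp add: ennreal_leI)
  qed
  then show ?thesis unfolding C_def fp_def fs_def n_def .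
qed

end
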